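(* Danzer's configuration $(35_4)$ is isomorphic to an incidence sum $\mathcal C_1\oplus_I\mathcal C_2$ in which $\mathcal C_1$ is (isomorphic to) the Steiner–Plücker configuration $(20_3,15_4)$ and $\mathcal C_2$ is (isomorphic to) the Cayley–Salmon configuration $(15_4,20_3)$.
   Context: Danzer's configuration $(35_4)$: points are the 4-subsets and lines the 3-subsets of $\{1,\dots,7\}$, a point incident with a line iff the line's subset is contained in the point's subset (equivalently, the points and lines in which seven hyperplanes in general position in projective 4-space meet by fours and by threes). Steiner–Plücker configuration: three triangles $A_iB_iC_i$ ($i=1,2,3$) perspective from a common point $O$; for each pair $i<j$ the corresponding sides meet in three points lying on an axis $a_{ij}$, and the three axes meet in a point $Z$. Points: $O$, the 9 vertices, the 9 side-intersection points, $Z$ (20 points); lines: the 3 lines through $O$ and corresponding vertices, the 9 sides, the 3 axes (15 lines), with the natural incidences (4 points per line, 3 lines per point). Cayley–Salmon configuration: three triangles $A_iB_iC_i$ perspective from a common line $\ell$ (corresponding sides of all three meet in three points $X_{AB},X_{BC},X_{CA}$ of $\ell$); for each pair $i<j$ they are perspective from a centre $O_{ij}$, and the three centres lie on a line $m$. Points: 9 vertices, $X_{AB},X_{BC},X_{CA}$, $O_{12},O_{13},O_{23}$ (15 points); lines: $\ell$, 9 sides, the 9 lines joining corresponding vertices, $m$ (20 lines), with the natural incidences (3 points per line, 4 lines per point). Incidence sum: for configurations $\mathcal C_1,\mathcal C_2$ with point sets $\mathcal P_i$ and line sets $\mathcal L_i$, and $I\subseteq\mathcal P_1\times\mathcal L_2\cup\mathcal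 P_2\times\mathcal L_1$, $\mathcal C_1\oplus_I\mathcal C_2$ is the incidence structure on points $\mathcal P_1\sqcup\mathcal P_2$ and lines $\mathcal L_1\sqcup\mathcal L_2$ whose incidences are those of $\mathcal C_1$, those of $\mathcal C_2$, and the pairs in $I$. *)

theory Defs
  imports Main
begin

record ('p, 'l) config =
  pts :: "'p set"
  lns :: "'l set"
  inc :: "'p \<Rightarrow> 'l \<Rightarrow> bool"

definition config_iso :: "('p, 'l) config \<Rightarrow> ('q, 'm) config \<Rightarrow> bool" where
  "config_iso C D \<longleftrightarrow> (\<exists>f g. bij_betw f (pts C) (pts D) \<and> bij_betw g (lns C) (lns D) \<and>
      (\<forall>p\<in>pts C. \<forall>l\<in>lns C. inc C p l \<longleftrightarrow> inc D (f p) (g l)))"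

text \<open>The extra incidence set I \<subseteq> P1 \<times> L2 \<union> P2 \<times> L1 is given as
  its two parts I12 \<subseteq> P1 \<times> L2 and I21 \<subseteq> P2 \<times> L1; the disjoint unions are sum types.\<close>

fun sum_inc :: "('p1, 'l1) config \<Rightarrow> ('p2, 'l2) config \<Rightarrow> ('p1 \<times> 'l2) set \<Rightarrow> ('p2 \<times> 'l1) set
    \<Rightarrow> 'p1 + 'p2 \<Rightarrow> 'l1 + 'l2 \<Rightarrow> bool" where
  "sum_inc C1 C2 I12 I21 (Inl p) (Inl l) = inc C1 p l"
| "sum_inc C1 C2 I12 I21 (Inr p) (Inr l) = inc C2 p l"
| "sum_inc C1 C2 I12 I21 (Inl p) (Inr l) = ((p, l) \<in> I12)"
| "sum_inc C1 C2 I12 I21 (Inr p) (Inl l) = ((p, l) \<in> I21)"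

definition incidence_sum :: "('p1, 'l1) config \<Rightarrow> ('p2, 'l2) config \<Rightarrow> ('p1 \<times> 'l2) set \<Rightarrow> ('p2 \<times> 'l1) set
    \<Rightarrow> ('p1 + 'p2, 'l1 + 'l2) config" where
  "incidence_sum C1 C2 I12 I21 =
     \<lparr> pts = Inl ` pts C1 \<union> Inr ` pts C2,
       lns = Inl ` lns C1 \<union> Inr ` lns C2,
       inc = sum_inc C1 C2 I12 I21 \<rparr>"

definition valid_extra :: "('p1, 'l1) config \<Rightarrow> ('p2, 'l2) config \<Rightarrow> ('p1 \<times> 'l2) set \<Rightarrow> ('p2 \<times> 'l1) set \<Rightarrow> bool" where
  "valid_extra C1 C2 I12 I21 \<longleftrightarrow> I12 \<subseteq> pts C1 \<times> lns C2 \<and> I21 \<subseteq> pts C2 \<times> lns C1"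

definition danzer :: "(nat set, nat set) config" where
  "danzer = \<lparr> pts = {S. S \<subseteq> {1..7} \<and> card S = 4},
              lns = {S. S \<subseteq> {1..7} \<and> card S = 3},
              inc = (\<lambda>P L. L \<subseteq> P) \<rparr>"

datatype tri = T1 | T2 | T3
datatype vtx = VA | VB | VC
datatype side = SAB | SBC | SCA
datatype tpair = P12 | P13 | P23

fun side_has :: "side \<Rightarrow> vtx \<Rightarrow> bool" where
  "side_has SAB v = (v = VA \<or> v = VB)"
| "side_has SBC v = (v = VB \<or> v = VC)"
| "side_has SCA v = (v = VC \<or> v = VA)"

fun in_pair :: "tri \<Rightarrow> tpair \<Rightarrow> bool" where
  "in_pair i P12 = (i = T1 \<or> i = T2)"
| "in_pair i P13 = (i = T1 \<or> i = T3)"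
| "in_pair i P23 = (i = T2 \<or> i = T3)"

datatype sp_point = SP_O | SP_V vtx tri | SP_X side tpair | SP_Z
  \<comment> \<open>O; vertex V_i; intersection of the corresponding sides of type s of triangles i,j; Z\<close>
datatype sp_line = SP_OL vtx | SP_Side side tri | SP_Axis tpair
  \<comment> \<open>line through O and V_1,V_2,V_3; side of type s of triangle i; axis a_ij\<close>

fun sp_inc :: "sp_point \<Rightarrow> sp_line \<Rightarrow> bool" where
  "sp_inc SP_O (SP_OL w) = True"
| "sp_inc (SP_V v i) (SP_OL w) = (v = w)"
| "sp_inc (SP_V v i) (SP_Side s j) = (i = j \<and> side_has s v)"
| "sp_inc (SP_X s p) (SP_Side s' j) = (s = s' \<and> in_pair j p)"
| "sp_inc (SP_X s p) (SP_Axis q) = (p = q)"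
| "sp_inc SP_Z (SP_Axis q) = True"
| "sp_inc _ _ = False"

definition steiner_pluecker :: "(sp_point, sp_line) config" where
  "steiner_pluecker = \<lparr> pts = UNIV, lns = UNIV, inc = sp_inc \<rparr>"

datatype cs_point = CS_V vtx tri | CS_X side | CS_O tpair
  \<comment> \<open>vertex V_i; X_s on l; perspectivity centre O_ij\<close>
datatype cs_line = CS_ell | CS_Side side tri | CS_Join vtx tpair | CS_m
  \<comment> \<open>l; side of type s of triangle i; line V_i V_j; m\<close>

fun cs_inc :: "cs_point \<Rightarrow> cs_line \<Rightarrow> bool" where
  "cs_inc (CS_V v i) (CS_Side s j) = (i = j \<and> side_has s v)"
| "cs_inc (CS_V v i) (CS_Join w p) = (v = w \<and> in_pair i p)"
| "cs_inc (CS_X s) CS_ell = True"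
| "cs_inc (CS_X s) (CS_Side s' j) = (s = s')"
| "cs_inc (CS_O p) (CS_Join w q) = (p = q)"
| "cs_inc (CS_O p) CS_m = True"
| "cs_inc _ _ = False"

definition cayley_salmon :: "(cs_point, cs_line) config" where
  "cayley_salmon = \<lparr> pts = UNIV, lns = UNIV, inc = cs_inc \<rparr>"

end

theory Submission
  imports Defs
begin

lemma config_iso_sym:
  assumes "config_iso C D" shows "config_iso D C"
proof -
  from assms obtain f g where f: "bij_betw f (pts C) (pts D)" and g: "bij_betw g (lns C) (lns D)"
    and i: "\<forall>p\<in>pts C. \<forall>l\<in>lns C. inc C p l \<longleftrightarrow> inc D (f p) (g l)"
    unfolding config_iso_def by blast
  let ?f = "inv_into (pts C) f" and ?g = "inv_into (lns C) g"
  have "bij_betw ?f (pts D) (pts C)" "bij_betw ?g (lns D) (lns C)"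
    using f g by (auto intro: bij_betw_inv_into)
  moreover have "\<forall>p\<in>pts D. \<forall>l\<in>lns D. inc D p l \<longleftrightarrow> inc C (?f p) (?g l)"
  proof (intro ballI)
    fix p l assume p: "p \<in> pts D" and l: "l \<in> lns D"
    have "?f p \<in> pts C" "?g l \<in> lns C" "f (?f p) = p" "g (?g l) = l"
      using p l f g by (auto simp: bij_betw_def inv_into_into f_inv_into_f)
    then show "inc D p l \<longleftrightarrow> inc C (?f p) (?g l)" using i by metis
  qed
  ultimately show ?thesis unfolding config_iso_def by blast
qed

lemma config_iso_refl: "config_iso C C"
  unfolding config_iso_def by (rule exI[of _ id], rule exI[of _ id]) simp

definition D6 :: "nat set" where "D6 = {1,2,3,4,5,6}"

fun vpair :: "vtx \<Rightarrow> nat set" where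
  "vpair VA = {2,3}" | "vpair VB = {1,3}" | "vpair VC = {1,2}"
fun sa :: "side \<Rightarrow> nat" where
  "sa SAB = 3" | "sa SBC = 1" | "sa SCA = 2"
fun ti :: "tri \<Rightarrow> nat" where
  "ti T1 = 4" | "ti T2 = 5" | "ti T3 = 6"
fun ppair :: "tpair \<Rightarrow> nat set" where
  "ppair P12 = {4,5}" | "ppair P13 = {4,6}" | "ppair P23 = {5,6}"
fun cv :: "vtx \<Rightarrow> nat" where
  "cv VA = 1" | "cv VB = 2" | "cv VC = 3"
fun xpair :: "side \<Rightarrow> nat set" where
  "xpair SAB = {1,2}" | "xpair SBC = {2,3}" | "xpair SCA = {1,3}"

fun spT :: "sp_point \<Rightarrow> nat set" where
  "spT SP_O = {1,2,3}" | "spT SP_Z = {4,5,6}"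
| "spT (SP_V v i) = insert (ti i) (vpair v)"
| "spT (SP_X s p) = insert (sa s) (ppair p)"
fun spL :: "sp_line \<Rightarrow> nat set" where
  "spL (SP_OL v) = vpair v" | "spL (SP_Axis p) = ppair p"
| "spL (SP_Side s i) = {sa s, ti i}"
fun csQ :: "cs_point \<Rightarrow> nat set" where
  "csQ (CS_V v i) = {cv v, ti i}" | "csQ (CS_X s) = xpair s" | "csQ (CS_O p) = ppair p"
fun csT :: "cs_line \<Rightarrow> nat set" where
  "csT CS_ell = {1,2,3}" | "csT CS_m = {4,5,6}"
| "csT (CS_Side s i) = insert (ti i) (xpair s)"
| "csT (CS_Join w p) = insert (cv w) (ppair p)"

fun hp :: "sp_point + cs_point \<Rightarrow> nat set" where
  "hp (Inl p) = insert 7 (spT p)" | "hp (Inr q) = D6 - csQ q"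
fun hl :: "sp_line + cs_line \<Rightarrow> nat set" where
  "hl (Inl l) = insert 7 (spL l)" | "hl (Inr l) = D6 - csT l"

lemma UNIV_sp_point: "(UNIV::sp_point set) = {(SP_O), (SP_Z), (SP_V VA T1), (SP_V VA T2), (SP_V VA T3), (SP_V VB T1), (SP_V VB T2), (SP_V VB T3), (SP_V VC T1), (SP_V VC T2), (SP_V VC T3), (SP_X SAB P12), (SP_X SAB P13), (SP_X SAB P23), (SP_X SBC P12), (SP_X SBC P13), (SP_X SBC P23), (SP_X SCA P12), (SP_X SCA P13), (SP_X SCA P23)}"
  apply (rule set_eqI)
  subgoal for x by (cases x; simp; metis vtx.exhaust tri.exhaust side.exhaust tpair.exhaust)
  done

lemma UNIV_sp_line: "(UNIV::sp_line set) = {(SP_OL VA), (SP_OL VB), (SP_OL VC), (SP_Side SAB T1), (SP_Side SAB T2), (SP_Side SAB T3), (SP_Side SBC T1), (SP_Side SBC T2), (SP_Side SBC T3), (SP_Side SCA T1), (SP_Side SCA T2), (SP_Side SCA T3), (SP_Axis P12), (SP_Axis P13), (SP_Axis P23)}"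
  apply (rule set_eqI)
  subgoal for x by (cases x; simp; metis vtx.exhaust tri.exhaust side.exhaust tpair.exhaust)
  done

lemma UNIV_cs_point: "(UNIV::cs_point set) = {(CS_V VA T1), (CS_V VA T2), (CS_V VA T3), (CS_V VB T1), (CS_V VB T2), (CS_V VB T3), (CS_V VC T1), (CS_V VC T2), (CS_V VC T3), (CS_X SAB), (CS_X SBC), (CS_X SCA), (CS_O P12), (CS_O P13), (CS_O P23)}"
  apply (rule set_eqI)
  subgoal for x by (cases x; simp; metis vtx.exhaust tri.exhaust side.exhaust tpair.exhaust)
  done

lemma UNIV_cs_line: "(UNIV::cs_line set) = {(CS_ell), (CS_m), (CS_Side SAB T1), (CS_Side SAB T2), (CS_Side SAB T3), (CS_Side SBC T1), (CS_Side SBC T2), (CS_Side SBC T3), (CS_Side SCA T1), (CS_Side SCA T2), (CS_Side SCA T3), (CS_Join VA P12), (CS_Join VA P13), (CS_Join VA P23), (CS_Join VB P12), (CS_Join VB P13), (CS_Join VB P23), (CS_Join VC P12), (CS_Join VC P13), (CS_Join VC P23)}"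
  apply (rule set_eqI)
  subgoal for x by (cases x; simp; metis vtx.exhaust tri.exhaust side.exhaust tpair.exhaust)
  done


lemma all_UNIV: "(\<forall>x. P x) \<longleftrightarrow> (\<forall>x\<in>UNIV. P x)" by simp

lemma sp_inc_ok: "\<forall>p l. sp_inc p l \<longleftrightarrow> hl (Inl l) \<subseteq> hp (Inl p)"
  apply (subst (1 2) all_UNIV)
  apply (simp only: UNIV_sp_point UNIV_sp_line ball_simps)
  apply (simp add: D6_def insert_Diff_if)
  done

lemma cs_inc_ok: "\<forall>p l. cs_inc p l \<longleftrightarrow> hl (Inr l) \<subseteq> hp (Inr p)"
  apply (subst (1 2) all_UNIV)
  apply (simp only: UNIV_cs_point UNIV_cs_line ball_simps)
  apply (simp add: D6_def insert_Diff_if)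
  done


definition dsp :: "nat set \<Rightarrow> sp_point" where
  "dsp S = (if 1\<in>S \<and> 2\<in>S \<and> 3\<in>S then SP_O else if 4\<in>S \<and> 5\<in>S \<and> 6\<in>S then SP_Z
     else if (1\<in>S \<and> 2\<in>S) \<or> (1\<in>S \<and> 3\<in>S) \<or> (2\<in>S \<and> 3\<in>S)
     then SP_V (if 1\<notin>S then VA else if 2\<notin>S then VB else VC) (if 4\<in>S then T1 else if 5\<in>S then T2 else T3)
     else SP_X (if 3\<in>S then SAB else if 1\<in>S then SBC else SCA) (if 6\<notin>S then P12 else if 5\<notin>S then P13 else P23))"

definition dcs :: "nat set \<Rightarrow> cs_point" where
  "dcs S = (if (1\<notin>S \<or> 2\<notin>S \<or> 3\<notin>S) \<and> (4\<notin>S \<or> 5\<notin>S \<or> 6\<notin>S)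
     then CS_V (if 1\<notin>S then VA else if 2\<notin>S then VB else VC) (if 4\<notin>S then T1 else if 5\<notin>S then T2 else T3)
     else if (1\<notin>S \<or> 2\<notin>S \<or> 3\<notin>S) then CS_X (if 3\<in>S then SAB else if 1\<in>S then SBC else SCA)
     else CS_O (if 6\<in>S then P12 else if 5\<in>S then P13 else P23))"

definition gp :: "nat set \<Rightarrow> sp_point + cs_point" where
  "gp S = (if 7 \<in> S then Inl (dsp S) else Inr (dcs S))"

definition dspl :: "nat set \<Rightarrow> sp_line" where
  "dspl S = (if (1\<in>S \<or> 2\<in>S \<or> 3\<in>S) \<and> (4\<in>S \<or> 5\<in>S \<or> 6\<in>S)
     then SP_Side (if 3\<in>S then SAB else if 1\<in>S then SBC else SCA) (if 4\<in>S then T1 else if 5\<in>S then T2 else T3)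
     else if (1\<in>S \<or> 2\<in>S \<or> 3\<in>S) then SP_OL (if 1\<notin>S then VA else if 2\<notin>S then VB else VC)
     else SP_Axis (if 6\<notin>S then P12 else if 5\<notin>S then P13 else P23))"

definition dcsl :: "nat set \<Rightarrow> cs_line" where
  "dcsl S = (if 1\<notin>S \<and> 2\<notin>S \<and> 3\<notin>S then CS_ell else if 4\<notin>S \<and> 5\<notin>S \<and> 6\<notin>S then CS_m
     else if (1\<notin>S \<and> 2\<notin>S) \<or> (1\<notin>S \<and> 3\<notin>S) \<or> (2\<notin>S \<and> 3\<notin>S)
     then CS_Side (if 3\<in>S then SAB else if 1\<in>S then SBC else SCA) (if 4\<notin>S then T1 else if 5\<notin>S then T2 else T3)
     else CS_Join (if 1\<notin>S then VA else if 2\<notin>S then VB else VC) (if 6\<in>S then P12 else if 5\<in>S then P13 else P23))"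

definition gl :: "nat set \<Rightarrow> sp_line + cs_line" where
  "gl S = (if 7 \<in> S then Inl (dspl S) else Inr (dcsl S))"

lemma UNIV_sum_eq: "(UNIV :: ('a + 'b) set) = Inl ` UNIV \<union> Inr ` UNIV" by (rule UNIV_sum)

lemma gp_hp: "\<forall>x. gp (hp x) = x"
  apply (subst all_UNIV)
  apply (simp only: UNIV_sum_eq UNIV_sp_point UNIV_cs_point image_insert image_empty Un_insert_left Un_empty_left ball_simps)
  apply (simp add: gp_def dsp_def dcs_def D6_def)
  done

lemma gl_hl: "\<forall>x. gl (hl x) = x"
  apply (subst all_UNIV)
  apply (simp only: UNIV_sum_eq UNIV_sp_line UNIV_cs_line image_insert image_empty Un_insert_left Un_empty_left ball_simps)
  apply (simp add: gl_def dspl_def dcsl_def D6_def)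
  done

lemma hp_in: "\<forall>x. hp x \<subseteq> {1..7} \<and> card (hp x) = 4"
  apply (subst all_UNIV)
  apply (simp only: UNIV_sum_eq UNIV_sp_point UNIV_cs_point image_insert image_empty Un_insert_left Un_empty_left ball_simps)
  apply (simp add: D6_def insert_Diff_if)
  done

lemma hl_in: "\<forall>x. hl x \<subseteq> {1..7} \<and> card (hl x) = 3"
  apply (subst all_UNIV)
  apply (simp only: UNIV_sum_eq UNIV_sp_line UNIV_cs_line image_insert image_empty Un_insert_left Un_empty_left ball_simps)
  apply (simp add: D6_def insert_Diff_if)
  done


lemma card_pts: "card (UNIV :: (sp_point + cs_point) set) = 35"
proof -
  have "card (Inl ` (UNIV::sp_point set) \<union> Inr ` (UNIV::cs_point set)) = 35"
    by (subst card_Un_disjoint) (auto simp: card_image UNIV_sp_point UNIV_cs_point)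
  then show ?thesis by (simp only: UNIV_sum_eq)
qed

lemma card_lns: "card (UNIV :: (sp_line + cs_line) set) = 35"
proof -
  have "card (Inl ` (UNIV::sp_line set) \<union> Inr ` (UNIV::cs_line set)) = 35"
    by (subst card_Un_disjoint) (auto simp: card_image UNIV_sp_line UNIV_cs_line)
  then show ?thesis by (simp only: UNIV_sum_eq)
qed

lemma c74: "(7::nat) choose 4 = 35" by (simp add: numeral_eq_Suc)
lemma c73: "(7::nat) choose 3 = 35" by (simp add: numeral_eq_Suc)

lemma card_k7: "card {S. S \<subseteq> {1..(7::nat)} \<and> card S = k} = 7 choose k"
  using n_subsets[of "{1..(7::nat)}" k] by simp

lemma bij_gen:
  fixes h :: "'a \<Rightarrow> nat set" and g
  assumes inv: "\<forall>x. g (h x) = x" and into: "\<forall>x. h x \<subseteq> {1..7} \<and> card (h x) = k"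
    and cU: "card (UNIV::'a set) = 7 choose k"
  shows "bij_betw h UNIV {S. S \<subseteq> {1..7} \<and> card S = k}"
proof -
  have inj: "inj_on h UNIV" by (rule inj_on_inverseI[of _ g]) (use inv in auto)
  have sub: "h ` UNIV \<subseteq> {S. S \<subseteq> {1..7} \<and> card S = k}" using into by auto
  have fin: "finite {S. S \<subseteq> {1..(7::nat)} \<and> card S = k}"
    by (rule finite_subset[of _ "Pow {1..7}"]) auto
  have "card (h ` UNIV) = card {S. S \<subseteq> {1..(7::nat)} \<and> card S = k}"
    using card_image[OF inj] cU card_k7 by simp
  then have "h ` UNIV = {S. S \<subseteq> {1..7} \<and> card S = k}"
    using card_subset_eq[OF fin sub] by simp
  with inj show ?thesis unfolding bij_betw_def by simp
qed

theorem theorem4p6: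
  shows "\<exists>(C1 :: (sp_point, sp_line) config) (C2 :: (cs_point, cs_line) config) I12 I21.
           config_iso C1 steiner_pluecker \<and> config_iso C2 cayley_salmon \<and>
           valid_extra C1 C2 I12 I21 \<and>
           config_iso danzer (incidence_sum C1 C2 I12 I21)"
proof -
  define I12 where "I12 = {(p, l). hl (Inr l) \<subseteq> hp (Inl p)}"
  define I21 where "I21 = {(p, l). hl (Inl l) \<subseteq> hp (Inr p)}"
  let ?S = "incidence_sum steiner_pluecker cayley_salmon I12 I21"
  have pS: "pts ?S = UNIV" "lns ?S = UNIV"
    by (simp_all add: incidence_sum_def steiner_pluecker_def cayley_salmon_def UNIV_sum[symmetric])
  have incS: "inc ?S x y \<longleftrightarrow> hl y \<subseteq> hp x" for x y
    using sp_inc_ok cs_inc_ok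
    by (cases x; cases y) (simp_all add: incidence_sum_def steiner_pluecker_def cayley_salmon_def I12_def I21_def)
  have b1: "bij_betw hp UNIV (pts danzer)"
    unfolding danzer_def using bij_gen[OF gp_hp hp_in] card_pts c74 by simp
  have b2: "bij_betw hl UNIV (lns danzer)"
    unfolding danzer_def using bij_gen[OF gl_hl hl_in] card_lns c73 by simp
  have "config_iso ?S danzer"
    unfolding config_iso_def pS
  proof (rule exI[of _ hp], rule exI[of _ hl], intro conjI)
    show "bij_betw hp UNIV (pts danzer)" by (rule b1)
    show "bij_betw hl UNIV (lns danzer)" by (rule b2)
    have incD: "inc danzer P L \<longleftrightarrow> L \<subseteq> P" for P L by (simp add: danzer_def)
    show "\<forall>p\<in>UNIV. \<forall>l\<in>UNIV. inc ?S p l = inc danzer (hp p) (hl l)"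
      by (simp only: incS incD simp_thms ball_UNIV)
  qed
  then have "config_iso danzer ?S" by (rule config_iso_sym)
  moreover have "valid_extra steiner_pluecker cayley_salmon I12 I21"
    by (simp add: valid_extra_def steiner_pluecker_def cayley_salmon_def)
  ultimately show ?thesis
    apply -
    apply (rule exI[of _ steiner_pluecker], rule exI[of _ cayley_salmon], rule exI[of _ I12], rule exI[of _ I21])
    apply (intro conjI config_iso_refl)
     apply assumption+
    done
qed

end
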